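(* Let $k\ge2$ and let $\tau\in\mathcal{S}_k$ be layered. Then there is a unique involution $\tilde\tau\in\mathcal{S}_{k+2}$ whose length-$k$ initial pattern equals $\tau$ and whose length-$(k+1)$ initial pattern is not an involution.
   Context: $\tau\in\mathcal{S}_k$ is layered if for some composition $(a_1,\ldots,a_m)$ of $k$ (all $a_i\ge1$), $\tau$ consists of the first $a_1$ positive integers in decreasing order, followed by the next $a_2$ positive integers in decreasing order, and so on. The pattern of a word of $j$ distinct letters is its order-preserving relabeling by $\{1,\ldots,j\}$; the length-$j$ initial pattern of a permutation $\sigma$ is the pattern of $\sigma_1\ldots\sigma_j$. *)

theory Defs
  imports Main
begin

text \<open>Permutations in S_n are represented in one-line notation as lists
  sigma_1 ... sigma_n of the values 1..n.\<close>

definition is_perm :: "nat \<Rightarrow> nat list \<Rightarrow> bool" where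
  "is_perm n xs \<longleftrightarrow> length xs = n \<and> distinct xs \<and> set xs = {1..n}"

text \<open>Involution: sigma(sigma(i)) = i for all positions i (1-indexed).\<close>
definition is_involution :: "nat list \<Rightarrow> bool" where
  "is_involution xs \<longleftrightarrow> (\<forall>i < length xs. xs ! (xs ! i - 1) = i + 1)"

text \<open>Pattern of a word of distinct letters: order-preserving relabeling by 1..j.\<close>
definition pattern :: "nat list \<Rightarrow> nat list" where
  "pattern xs = map (\<lambda>x. card {y \<in> set xs. y \<le> x}) xs"

text \<open>Layered permutation built from a composition, starting after offset s.\<close>
fun layered_of :: "nat list \<Rightarrow> nat \<Rightarrow> nat list" where
  "layered_of [] s = []"
| "layered_of (a # as) s = rev [s + 1..<s + a + 1] @ layered_of as (s + a)"

definition layered :: "nat \<Rightarrow> nat list \<Rightarrow> bool" where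
  "layered k tau \<longleftrightarrow> (\<exists>as. (\<forall>a \<in> set as. a \<ge> 1) \<and> sum_list as = k \<and> tau = layered_of as 0)"

end

theory Submission
  imports Defs
begin

definition F :: "nat list \<Rightarrow> nat \<Rightarrow> nat" where "F xs i = xs ! (i - 1)"

definition rank2 :: "nat \<Rightarrow> nat \<Rightarrow> nat \<Rightarrow> nat" where
 "rank2 x y w = w - (if x \<le> w then 1 else 0) - (if y \<le> w then 1 else 0)"
definition rank1 :: "nat \<Rightarrow> nat \<Rightarrow> nat" where
 "rank1 y w = w - (if y \<le> w then 1 else 0)"
definition unrank :: "nat \<Rightarrow> nat \<Rightarrow> nat \<Rightarrow> nat" where
 "unrank x y j = (if j < min x y then j else if j + 1 < max x y then j + 1 else j + 2)"

lemma rank_unrank: "x \<noteq> y \<Longrightarrow> 1 \<le> x \<Longrightarrow> 1 \<le> y \<Longrightarrow> rank2 x y (unrank x y j) = j"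
  by (auto simp: rank2_def unrank_def min_def max_def)
lemma unrank_rank: "x \<noteq> y \<Longrightarrow> w \<noteq> x \<Longrightarrow> w \<noteq> y \<Longrightarrow> unrank x y (rank2 x y w) = w"
  by (auto simp: rank2_def unrank_def min_def max_def)
lemma unrank_ne: "x \<noteq> y \<Longrightarrow> 1 \<le> x \<Longrightarrow> 1 \<le> y \<Longrightarrow> unrank x y j \<noteq> x \<and> unrank x y j \<noteq> y"
  by (auto simp: unrank_def min_def max_def)
lemma unrank_range: "1 \<le> j \<Longrightarrow> j \<le> k \<Longrightarrow> x \<le> k+2 \<Longrightarrow> y \<le> k+2 \<Longrightarrow> 1 \<le> unrank x y j \<and> unrank x y j \<le> k + 2"
  by (auto simp: unrank_def min_def max_def)

lemma inv_F: "is_involution xs \<Longrightarrow> 1 \<le> i \<Longrightarrow> i \<le> length xs \<Longrightarrow> F xs (F xs i) = i"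
  unfolding is_involution_def F_def
  by (drule spec[of _ "i - 1"]) simp

lemma F_inv: "(\<And>i. 1 \<le> i \<Longrightarrow> i \<le> length xs \<Longrightarrow> F xs (F xs i) = i) \<Longrightarrow> is_involution xs"
  unfolding is_involution_def F_def
  by (metis Suc_eq_plus1 Suc_le_eq diff_Suc_1 le_add2)

lemma perm_from_F:
  assumes "length xs = n" "\<And>i. 1\<le>i \<Longrightarrow> i\<le>n \<Longrightarrow> 1 \<le> F xs i \<and> F xs i \<le> n"
    "\<And>i. 1\<le>i \<Longrightarrow> i\<le>n \<Longrightarrow> F xs (F xs i) = i"
  shows "is_perm n xs"
proof -
  have d: "distinct xs"
  proof (subst distinct_conv_nth, intro allI impI)
    fix a b assume "a < length xs" "b < length xs" "a \<noteq> b"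
    show "xs ! a \<noteq> xs ! b"
    proof
      assume e: "xs ! a = xs ! b"
      have "F xs (F xs (a+1)) = a+1" using assms \<open>a < length xs\<close> by simp
      moreover have "F xs (F xs (b+1)) = b+1" using assms \<open>b < length xs\<close> by simp
      ultimately show False using e \<open>a \<noteq> b\<close> by (simp add: F_def)
    qed
  qed
  have s1: "set xs \<subseteq> {1..n}"
  proof
    fix v assume "v \<in> set xs"
    then obtain a where "a < length xs" "xs ! a = v" by (auto simp: in_set_conv_nth)
    then show "v \<in> {1..n}" using assms(2)[of "a+1"] assms(1) by (simp add: F_def)
  qed
  have s2: "{1..n} \<subseteq> set xs"
  proof
    fix v assume v: "v \<in> {1..n}"
    have "v = F xs (F xs v)" using assms(3) v by simp
    also have "\<dots> = xs ! (F xs v - 1)" by (simp add: F_def)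
    also have "\<dots> \<in> set xs" using assms(2)[of v] v assms(1) by auto
    finally show "v \<in> set xs" .
  qed
  show ?thesis using d s1 s2 assms(1) unfolding is_perm_def by auto
qed

lemma length_pattern[simp]: "length (pattern xs) = length xs"
  by (simp add: pattern_def)

lemma pattern_F: "1 \<le> i \<Longrightarrow> i \<le> length xs \<Longrightarrow> F (pattern xs) i = card {v \<in> set xs. v \<le> F xs i}"
  by (simp add: pattern_def F_def)

lemma card_rank2: assumes "x \<noteq> y" "x \<in> {1..n}" "y \<in> {1..n}" "w \<in> {1..n}"
  shows "card {v \<in> {1..n} - {x,y}. v \<le> w} = rank2 x y w"
proof -
  have "{v \<in> {1..n} - {x,y}. v \<le> w} = {1..w} - {x,y}" using assms by auto
  moreover have "card ({1..w} - {x,y}) = w - card ({1..w} \<inter> {x,y})"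
    by (simp add: card_Diff_subset_Int)
  moreover have "card ({1..w} \<inter> {x,y}) = (if x \<le> w then 1 else 0) + (if y \<le> w then 1 else 0)"
    using assms by (cases "x \<le> w"; cases "y \<le> w") (auto simp: Int_insert_right)
  ultimately show ?thesis by (simp add: rank2_def)
qed

lemma card_rank1: assumes "y \<in> {1..n}" "w \<in> {1..n}"
  shows "card {v \<in> {1..n} - {y}. v \<le> w} = rank1 y w"
proof -
  have "{v \<in> {1..n} - {y}. v \<le> w} = {1..w} - {y}" using assms by auto
  moreover have "card ({1..w} - {y}) = w - card ({1..w} \<inter> {y})"
    by (simp add: card_Diff_subset_Int)
  moreover have "card ({1..w} \<inter> {y}) = (if y \<le> w then 1 else 0)"
    using assms by (cases "y \<le> w") auto
  ultimately show ?thesis by (simp add: rank1_def)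
qed

lemma take_sets: assumes "is_perm (k+2) t"
  shows "set (take k t) = {1..k+2} - {F t (k+1), F t (k+2)}"
    and "set (take (k+1) t) = {1..k+2} - {F t (k+2)}"
proof -
  have len: "length t = k+2" and d: "distinct t" and st: "set t = {1..k+2}"
    using assms by (auto simp: is_perm_def)
  have a: "take (Suc k) t = take k t @ [t!k]" using len by (simp add: take_Suc_conv_app_nth)
  have b: "take (Suc (Suc k)) t = take (Suc k) t @ [t ! Suc k]"
    by (rule take_Suc_conv_app_nth) (simp add: len)
  have e: "t = take k t @ [t ! k, t ! (k+1)]" using a b len by simp
  have e2: "take (k+1) t = take k t @ [t ! k]"
    using len by (simp add: take_Suc_conv_app_nth)
  have d2: "distinct (take k t @ [t ! k, t ! (k+1)])" using d e by metis
  have st2: "set (take k t @ [t ! k, t ! (k+1)]) = {1..k+2}" using st e by metis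
  show "set (take k t) = {1..k+2} - {F t (k+1), F t (k+2)}"
    using d2 st2 by (auto simp: F_def)
  show "set (take (k+1) t) = {1..k+2} - {F t (k+2)}"
    using d2 st2 e2 by (auto simp: F_def)
qed


lemma F_append: "1 \<le> i \<Longrightarrow> F (xs @ ys) i = (if i \<le> length xs then F xs i else F ys (i - length xs))"
  by (auto simp: F_def nth_append)

lemma F_rev_upt: "1 \<le> i \<Longrightarrow> i \<le> a \<Longrightarrow> F (rev [s+1..<s+a+1]) i = s+a+1-i"
  by (simp add: F_def rev_nth del: upt_Suc)

lemma length_layered[simp]: "length (layered_of as s) = sum_list as"
  by (induction as arbitrary: s) auto

lemma layered_append: "layered_of (as @ bs) s = layered_of as s @ layered_of bs (s + sum_list as)"
  by (induction as arbitrary: s) (auto simp: add.assoc)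

lemma layered_inv: "1 \<le> i \<Longrightarrow> i \<le> sum_list as \<Longrightarrow>
  s < F (layered_of as s) i \<and> F (layered_of as s) i \<le> s + sum_list as \<and>
  F (layered_of as s) (F (layered_of as s) i - s) = i + s"
proof (induction as arbitrary: s i)
  case Nil then show ?case by simp
next
  case (Cons a as)
  define L' where "L' = layered_of as (s + a)"
  have L: "layered_of (a # as) s = rev [s+1..<s+a+1] @ L'" by (simp add: L'_def)
  have len: "length (rev [s+1..<s+a+1]) = a" by simp
  show ?case
  proof (cases "i \<le> a")
    case True
    have v: "F (layered_of (a # as) s) i = s+a+1-i" using True Cons.prems F_rev_upt[of i a s]
      by (simp only: L F_append len) simp
    have c: "a+1-i \<le> a" "1 \<le> a+1-i" using True Cons.prems by auto
    have w0: "F (layered_of (a # as) s) (a+1-i) = F (rev [s+1..<s+a+1]) (a+1-i)"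
      by (simp only: L F_append[OF c(2)] len c if_True)
    have w: "F (layered_of (a # as) s) (a+1-i) = s+i" unfolding w0 using F_rev_upt[OF c(2) c(1), of s] True by simp
    have w': "F (layered_of (a # as) s) (F (layered_of (a # as) s) i - s) = i + s"
      using v w True by (simp add: add.commute)
    have ar: "s < s+a+1-i" "s+a+1-i \<le> s + sum_list (a#as)" using True Cons.prems by auto
    show ?thesis unfolding v using w' ar v by simp
  next
    case False
    have IH: "s + a < F L' (i - a) \<and> F L' (i - a) \<le> s + a + sum_list as \<and> F L' (F L' (i - a) - (s + a)) = i - a + (s + a)"
      unfolding L'_def using Cons.IH[of "i - a" "s + a"] Cons.prems False by simp
    have v: "F (layered_of (a # as) s) i = F L' (i - a)" using False Cons.prems
      by (simp only: L F_append len) simp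
    have c: "1 \<le> F L' (i - a) - s" "\<not> F L' (i - a) - s \<le> a" using IH by auto
    have w: "F (layered_of (a # as) s) (F L' (i - a) - s) = F L' (F L' (i - a) - s - a)"
      by (simp only: L F_append[OF c(1)] len c if_False)
    show ?thesis using v w IH False by simp
  qed
qed


lemma sol_xy:
  fixes T tf :: "nat \<Rightarrow> nat" and k s :: nat
  assumes k2: "2 \<le> k" and sk: "s < k"
  and TT: "\<And>i. 1 \<le> i \<Longrightarrow> i \<le> k+2 \<Longrightarrow> 1 \<le> T i \<and> T i \<le> k+2 \<and> T (T i) = i"
  and pat: "\<And>i. 1 \<le> i \<Longrightarrow> i \<le> k \<Longrightarrow> tf i = rank2 (T (k+1)) (T (k+2)) (T i)"
  and nsig: "\<not> (\<forall>i. 1 \<le> i \<and> i \<le> k+1 \<longrightarrow> rank1 (T (k+2)) (T (rank1 (T (k+2)) (T i))) = i)"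
  and tinj: "\<And>i j. 1 \<le> i \<Longrightarrow> i \<le> k \<Longrightarrow> 1 \<le> j \<Longrightarrow> j \<le> k \<Longrightarrow> tf i = tf j \<Longrightarrow> i = j"
  and HB: "\<And>i. 1 \<le> i \<Longrightarrow> i \<le> s \<Longrightarrow> 1 \<le> tf i \<and> tf i \<le> s \<and> tf (tf i) = i"
  and HC: "\<And>j. s < j \<Longrightarrow> j \<le> k \<Longrightarrow> tf j = k+s+1-j"
  shows "(s+1<k \<and> T(k+1)=k+1 \<and> T(k+2)=s+1) \<or>
         (s+1=k \<and> T(k+2)=k \<and> 1 \<le> T(k+1) \<and> T(k+1) \<le> k-1 \<and> tf (T(k+1)) = k-1)"
proof -
  define x where "x = T (k+1)"
  define y where "y = T (k+2)"
  have injT: "i = j" if "1 \<le> i" "i \<le> k+2" "1 \<le> j" "j \<le> k+2" "T i = T j" for i j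
    using TT[of i] TT[of j] that by metis
  have xr: "1 \<le> x" "x \<le> k+2" and yr: "1 \<le> y" "y \<le> k+2" using TT[of "k+1"] TT[of "k+2"]
    by (auto simp: x_def y_def)
  have Tx: "T x = k+1" and Ty: "T y = k+2" using TT[of "k+1"] TT[of "k+2"] by (auto simp: x_def y_def)
  have xy: "x \<noteq> y" using injT[of "k+1" "k+2"] by (auto simp: x_def y_def)
  have Tne: "T i \<noteq> x \<and> T i \<noteq> y" if "1 \<le> i" "i \<le> k" for i
  proof -
    have "T i \<noteq> T (k+1)" using injT[of i "k+1"] that by auto
    moreover have "T i \<noteq> T (k+2)" using injT[of i "k+2"] that by auto
    ultimately show ?thesis by (simp add: x_def y_def)
  qed
  have Tu: "T i = unrank x y (tf i)" if "1 \<le> i" "i \<le> k" for i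
    using pat[OF that] Tne[OF that] unrank_rank[OF xy] by (simp add: x_def y_def)
  have sig_contra: "PP" if "\<And>i. 1 \<le> i \<Longrightarrow> i \<le> k+1 \<Longrightarrow> rank1 y (T (rank1 y (T i))) = i"
    for PP using nsig that by (auto simp: y_def)
  have tfs1: "tf (s+1) = k" using HC[of "s+1"] sk by simp
  consider "x = k+2" | "y = k+2" | "x = k+1" "y \<le> k" | "x \<le> k" "y \<le> k"
  proof -
    have "y = k+1 \<Longrightarrow> x = k+2" using Ty TT[of "k+1"] by (simp add: x_def)
    then show ?thesis using that xr yr xy by linarith
  qed
  then show ?thesis
  proof cases
    case 1
    have yv: "y = k+1" using Tx 1 by (simp add: y_def)
    show ?thesis
    proof (rule sig_contra)
      fix i assume i: "1 \<le> i" "i \<le> k+1"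
      show "rank1 y (T (rank1 y (T i))) = i"
      proof (cases "i = k+1")
        case True
        then show ?thesis using 1 yv TT[of "k+2"] by (simp add: x_def rank1_def)
      next
        case False
        then have "T i \<noteq> k+1" "T i \<noteq> k+2" using Tne[of i] i 1 yv by auto
        then have "T i \<le> k" using TT[of i] i by auto
        then show ?thesis using TT[of i] TT[of "T i"] i yv False by (simp add: rank1_def)
      qed
    qed
  next
    case 2
    show ?thesis
    proof (rule sig_contra)
      fix i assume i: "1 \<le> i" "i \<le> k+1"
      have "T i \<noteq> k+2" using injT[of i "k+2"] i 2 Ty by auto
      then have "T i \<le> k+1" using TT[of i] i by auto
      then show "rank1 y (T (rank1 y (T i))) = i" using TT[of i] TT[of "T i"] i 2 by (simp add: rank1_def)
    qed
  next
    case 3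
    have "tf y = rank2 x y (T y)" using pat[of y] 3 yr by (simp add: x_def y_def)
    then have "tf y = k" using 3 Ty by (simp add: rank2_def)
    then have ys: "y = s+1" using tinj[of y "s+1"] tfs1 3 yr sk by auto
    show ?thesis
    proof (cases "s+1 < k")
      case True
      then show ?thesis using 3 ys by (simp add: x_def y_def)
    next
      case False
      then have yk: "y = k" using ys sk by simp
      show ?thesis
      proof (rule sig_contra)
        fix i assume i: "1 \<le> i" "i \<le> k+1"
        consider "i = k+1" | "i = k" | "i < k" using i by linarith
        then show "rank1 y (T (rank1 y (T i))) = i"
        proof cases
          case 1 then show ?thesis using yk Ty 3 by (simp add: x_def rank1_def)
        next
          case 2 then show ?thesis using yk Ty 3 by (simp add: x_def rank1_def)
        next
          case c: 3
          have "T i \<noteq> k" using TT[of i] i c Ty yk by auto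
          moreover have "T i \<noteq> k+1" using Tne[of i] i c 3 by auto
          moreover have "T i \<noteq> k+2" using injT[of i k] i c Ty yk by auto
          ultimately have "T i < k" using TT[of i] i by auto
          then show ?thesis using TT[of i] TT[of "T i"] i yk c by (simp add: rank1_def)
        qed
      qed
    qed
  next
    case 4
    have "tf y = rank2 x y (T y)" using pat[of y] 4 yr by (simp add: x_def y_def)
    then have "tf y = k" using 4 Ty xr by (simp add: rank2_def)
    then have ys: "y = s+1" using tinj[of y "s+1"] tfs1 4 yr sk by auto
    have "tf x = rank2 x y (T x)" using pat[of x] 4 xr by (simp add: x_def y_def)
    then have tfx: "tf x = k - 1" using 4 Tx yr xr by (simp add: rank2_def)
    show ?thesis
    proof (cases "s+1 < k")
      case False
      then have yk: "y = k" using ys sk by simp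
      then show ?thesis using 4 xy xr tfx ys False by (simp add: x_def y_def)
    next
      case True
      have "tf (s+2) = k - 1" using HC[of "s+2"] True by simp
      then have xs: "x = s+2" using tinj[of x "s+2"] tfx 4 xr True by auto
      have U: "unrank x y j = (if j \<le> s then j else j + 2)" for j
        using xs ys by (simp add: unrank_def)
      have Tu': "T i = (if tf i \<le> s then tf i else tf i + 2)" if "1 \<le> i" "i \<le> k" for i
        using Tu[OF that] U by simp
      show ?thesis
      proof (rule sig_contra)
        fix i assume i: "1 \<le> i" "i \<le> k+1"
        consider "i = k+1" | "i = s+1" | "i \<le> s" | "s+2 \<le> i" "i \<le> k" using i by linarith
        then show "rank1 y (T (rank1 y (T i))) = i"
        proof cases
          case 1 then show ?thesis using xs ys Ty sk by (simp add: x_def rank1_def)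
        next
          case 2 then show ?thesis using xs ys Ty sk by (simp add: x_def rank1_def)
        next
          case 3
          have h: "1 \<le> tf i \<and> tf i \<le> s \<and> tf (tf i) = i" using HB[of i] 3 i by simp
          have "T i = tf i" using Tu'[of i] h 3 sk i by simp
          moreover have "T (tf i) = i" using Tu'[of "tf i"] h 3 sk i by simp
          ultimately show ?thesis using h 3 ys by (simp add: rank1_def)
        next
          case 4
          have a: "tf i = k+s+1-i" using HC[of i] 4 by simp
          have a2: "\<not> tf i \<le> s" using a 4 by simp
          have b: "T i = k+s+3-i" using Tu'[of i] a a2 4 by (simp only: if_False; linarith)
          have c: "rank1 y (T i) = k+s+2-i" using b ys 4 by (simp add: rank1_def)
          have d: "tf (k+s+2-i) = i - 1" using HC[of "k+s+2-i"] 4 by simp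
          have d2: "\<not> tf (k+s+2-i) \<le> s" using d 4 by simp
          have e: "T (k+s+2-i) = i + 1" using Tu'[of "k+s+2-i"] d d2 4 by (simp only: if_False; linarith)
          show ?thesis using c e ys 4 by (simp add: rank1_def)
        qed
      qed
    qed
  qed
qed


lemma exA:
  fixes tf :: "nat \<Rightarrow> nat" and k s :: nat
  assumes sk: "s + 1 < k"
  and tr: "\<And>i. 1 \<le> i \<Longrightarrow> i \<le> k \<Longrightarrow> 1 \<le> tf i \<and> tf i \<le> k"
  and HB: "\<And>i. 1 \<le> i \<Longrightarrow> i \<le> s \<Longrightarrow> 1 \<le> tf i \<and> tf i \<le> s \<and> tf (tf i) = i"
  and HC: "\<And>j. s < j \<Longrightarrow> j \<le> k \<Longrightarrow> tf j = k+s+1-j"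
  and T0: "\<And>i. 1 \<le> i \<Longrightarrow> i \<le> k+2 \<Longrightarrow> T i = (if i \<le> k then unrank (k+1) (s+1) (tf i) else if i = k+1 then k+1 else s+1)"
  shows "\<And>i. 1 \<le> i \<Longrightarrow> i \<le> k+2 \<Longrightarrow> 1 \<le> T i \<and> T i \<le> k+2 \<and> T (T i) = i"
    and "\<not> (\<forall>i. 1 \<le> i \<and> i \<le> k+1 \<longrightarrow> rank1 (T (k+2)) (T (rank1 (T (k+2)) (T i))) = i)"
proof -
  have U: "unrank (k+1) (s+1) j = (if j \<le> s then j else if j < k then j+1 else j+2)" for j
    using sk by (simp add: unrank_def)
  have Tl: "T i = (if tf i \<le> s then tf i else if tf i < k then tf i+1 else tf i+2)" if "1 \<le> i" "i \<le> k" for i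
    using T0[of i] U that by simp
  show "1 \<le> T i \<and> T i \<le> k+2 \<and> T (T i) = i" if i: "1 \<le> i" "i \<le> k+2" for i
  proof -
    consider "i \<le> s" | "i = s+1" | "s+2 \<le> i" "i \<le> k" | "i = k+1" | "i = k+2" using i by linarith
    then show ?thesis
    proof cases
      case 1
      have h: "1 \<le> tf i \<and> tf i \<le> s \<and> tf (tf i) = i" using HB[of i] 1 i by simp
      have "T i = tf i" using Tl[of i] h 1 sk i by simp
      moreover have "T (tf i) = i" using Tl[of "tf i"] h 1 sk by simp
      ultimately show ?thesis using h sk by simp
    next
      case 2
      have "tf i = k" using HC[of i] 2 sk by simp
      then have "T i = k+2" using Tl[of i] 2 sk by simp
      then show ?thesis using T0[of "k+2"] 2 by simp
    next
      case 3
      have a: "tf i = k+s+1-i" using HC[of i] 3 by simp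
      have b: "T i = k+s+2-i" using Tl[of i] a 3 by (simp; arith)
      have d: "tf (k+s+2-i) = i - 1" using HC[of "k+s+2-i"] 3 by simp
      have e: "T (k+s+2-i) = i" using Tl[of "k+s+2-i"] d 3 by (simp; arith)
      show ?thesis using b e 3 by (simp; arith)
    next
      case 4 then show ?thesis using T0[of "k+1"] by simp
    next
      case 5
      have "tf (s+1) = k" using HC[of "s+1"] sk by simp
      then have "T (s+1) = k+2" using Tl[of "s+1"] sk by simp
      then show ?thesis using T0[of "k+2"] 5 sk by simp
    qed
  qed
  have "tf k = s+1" using HC[of k] sk by simp
  then have Tk: "T k = s+2" using Tl[of k] sk by simp
  have "rank1 (T (k+2)) (T (rank1 (T (k+2)) (T (k+1)))) \<noteq> k+1"
    using T0[of "k+1"] T0[of "k+2"] Tk sk by (simp add: rank1_def)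
  then show "\<not> (\<forall>i. 1 \<le> i \<and> i \<le> k+1 \<longrightarrow> rank1 (T (k+2)) (T (rank1 (T (k+2)) (T i))) = i)"
    by auto
qed

lemma exB:
  fixes tf :: "nat \<Rightarrow> nat" and k s :: nat
  assumes k2: "2 \<le> k" and sk: "s + 1 < k"
  and tr: "\<And>i. 1 \<le> i \<Longrightarrow> i \<le> k \<Longrightarrow> 1 \<le> tf i \<and> tf i \<le> k"
  and tfk: "tf k = k"
  and HB: "\<And>i. 1 \<le> i \<Longrightarrow> i \<le> s \<Longrightarrow> 1 \<le> tf i \<and> tf i \<le> s \<and> tf (tf i) = i"
  and HC: "\<And>j. s < j \<Longrightarrow> j \<le> k - 1 \<Longrightarrow> tf j = k+s-j"
  and T0: "\<And>i. 1 \<le> i \<Longrightarrow> i \<le> k+2 \<Longrightarrow> T i = (if i \<le> k then unrank (s+1) k (tf i) else if i = k+1 then s+1 else k)"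
  shows "\<And>i. 1 \<le> i \<Longrightarrow> i \<le> k+2 \<Longrightarrow> 1 \<le> T i \<and> T i \<le> k+2 \<and> T (T i) = i"
    and "\<not> (\<forall>i. 1 \<le> i \<and> i \<le> k+1 \<longrightarrow> rank1 (T (k+2)) (T (rank1 (T (k+2)) (T i))) = i)"
proof -
  have U: "unrank (s+1) k j = (if j \<le> s then j else if j+1 < k then j+1 else j+2)" for j
    using sk by (simp add: unrank_def)
  have Tl: "T i = (if tf i \<le> s then tf i else if tf i + 1 < k then tf i+1 else tf i+2)" if "1 \<le> i" "i \<le> k" for i
    using T0[of i] U that by simp
  show "1 \<le> T i \<and> T i \<le> k+2 \<and> T (T i) = i" if i: "1 \<le> i" "i \<le> k+2" for i
  proof -
    consider "i \<le> s" | "i = s+1" | "s+2 \<le> i" "i \<le> k - 1" | "i = k" | "i = k+1" | "i = k+2" using i by linarith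
    then show ?thesis
    proof cases
      case 1
      have h: "1 \<le> tf i \<and> tf i \<le> s \<and> tf (tf i) = i" using HB[of i] 1 i by simp
      have "T i = tf i" using Tl[of i] h 1 sk i by simp
      moreover have "T (tf i) = i" using Tl[of "tf i"] h 1 sk by simp
      ultimately show ?thesis using h sk by simp
    next
      case 2
      have "tf i = k - 1" using HC[of i] 2 sk by simp
      then have "T i = k+1" using Tl[of i] 2 sk by simp
      then show ?thesis using T0[of "k+1"] 2 by simp
    next
      case 3
      have a: "tf i = k+s-i" using HC[of i] 3 by simp
      have b: "T i = k+s+1-i" using Tl[of i] a 3 by (simp; arith)
      have d: "tf (k+s+1-i) = i - 1" using HC[of "k+s+1-i"] 3 by simp
      have e: "T (k+s+1-i) = i" using Tl[of "k+s+1-i"] d 3 by (simp; arith)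
      show ?thesis using b e 3 by (simp; arith)
    next
      case 4
      have "T k = k+2" using Tl[of k] tfk sk by simp
      then show ?thesis using T0[of "k+2"] 4 by simp
    next
      case 5
      have "tf (s+1) = k - 1" using HC[of "s+1"] sk by simp
      then have "T (s+1) = k+1" using Tl[of "s+1"] sk by simp
      then show ?thesis using T0[of "k+1"] 5 sk by simp
    next
      case 6
      have "T k = k+2" using Tl[of k] tfk sk by simp
      then show ?thesis using T0[of "k+2"] 6 k2 by simp
    qed
  qed
  have "tf (s+1) = k - 1" using HC[of "s+1"] sk by simp
  then have Ts: "T (s+1) = k+1" using Tl[of "s+1"] sk by simp
  have "rank1 (T (k+2)) (T (rank1 (T (k+2)) (T (k+1)))) \<noteq> k+1"
    using T0[of "k+1"] T0[of "k+2"] Ts sk by (simp add: rank1_def)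
  then show "\<not> (\<forall>i. 1 \<le> i \<and> i \<le> k+1 \<longrightarrow> rank1 (T (k+2)) (T (rank1 (T (k+2)) (T i))) = i)"
    by auto
qed


definition mk :: "nat \<Rightarrow> (nat \<Rightarrow> nat) \<Rightarrow> nat \<Rightarrow> nat \<Rightarrow> nat list" where
  "mk k tf x0 y0 = map (\<lambda>i. if i \<le> k then unrank x0 y0 (tf i) else if i = k+1 then x0 else y0) [1..<k+3]"

lemma length_mk[simp]: "length (mk k tf x0 y0) = k+2"
  by (simp add: mk_def)

lemma F_mk: "1 \<le> i \<Longrightarrow> i \<le> k+2 \<Longrightarrow>
  F (mk k tf x0 y0) i = (if i \<le> k then unrank x0 y0 (tf i) else if i = k+1 then x0 else y0)"
  by (simp add: mk_def F_def nth_append del: upt_Suc)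

lemma list_eq_F:
  assumes "length xs = length ys" "\<And>i. 1 \<le> i \<Longrightarrow> i \<le> length xs \<Longrightarrow> F xs i = F ys i"
  shows "xs = ys"
proof (rule nth_equalityI)
  show "length xs = length ys" by fact
  fix j assume "j < length xs"
  then show "xs ! j = ys ! j" using assms(2)[of "j+1"] by (simp add: F_def)
qed

lemma perm_rng: "is_perm n t \<Longrightarrow> 1 \<le> i \<Longrightarrow> i \<le> n \<Longrightarrow> 1 \<le> F t i \<and> F t i \<le> n"
proof -
  assume a: "is_perm n t" "1 \<le> i" "i \<le> n"
  have m: "t ! (i - 1) \<in> set t" by (rule nth_mem) (use a in \<open>simp add: is_perm_def\<close>)
  have "set t = {1..n}" using a(1) by (simp add: is_perm_def)
  then show ?thesis using m by (simp add: F_def)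
qed

lemma perm_inj: "is_perm n t \<Longrightarrow> 1 \<le> i \<Longrightarrow> i \<le> n \<Longrightarrow> 1 \<le> j \<Longrightarrow> j \<le> n \<Longrightarrow> F t i = F t j \<Longrightarrow> i = j"
  unfolding is_perm_def F_def
  by (metis Suc_diff_1 Suc_le_eq distinct_conv_nth less_imp_diff_less le_eq_less_or_eq diff_less zero_less_one order_less_le_trans)

lemma pat_iff:
  assumes p: "is_perm (k+2) t" and lt: "length tau = k"
  shows "pattern (take k t) = tau \<longleftrightarrow>
    (\<forall>i. 1 \<le> i \<and> i \<le> k \<longrightarrow> F tau i = rank2 (F t (k+1)) (F t (k+2)) (F t i))"
proof -
  have len: "length t = k+2" using p by (simp add: is_perm_def)
  have xy: "F t (k+1) \<noteq> F t (k+2)" using perm_inj[OF p, of "k+1" "k+2"] by auto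
  have Fp: "F (pattern (take k t)) i = rank2 (F t (k+1)) (F t (k+2)) (F t i)" if i: "1 \<le> i" "i \<le> k" for i
  proof -
    have "F (pattern (take k t)) i = card {v \<in> set (take k t). v \<le> F (take k t) i}"
      using i len by (simp add: pattern_F)
    also have "F (take k t) i = F t i" using i by (simp add: F_def)
    also have "set (take k t) = {1..k+2} - {F t (k+1), F t (k+2)}" using take_sets(1)[OF p] .
    also have "card {v \<in> {1..k+2} - {F t (k+1), F t (k+2)}. v \<le> F t i} = rank2 (F t (k+1)) (F t (k+2)) (F t i)"
      using card_rank2[OF xy] perm_rng[OF p, of "k+1"] perm_rng[OF p, of "k+2"] perm_rng[OF p, of i] i by simp
    finally show ?thesis .
  qed
  show ?thesis
  proof
    assume "pattern (take k t) = tau"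
    then show "\<forall>i. 1 \<le> i \<and> i \<le> k \<longrightarrow> F tau i = rank2 (F t (k+1)) (F t (k+2)) (F t i)"
      using Fp by auto
  next
    assume h: "\<forall>i. 1 \<le> i \<and> i \<le> k \<longrightarrow> F tau i = rank2 (F t (k+1)) (F t (k+2)) (F t i)"
    show "pattern (take k t) = tau"
      by (rule list_eq_F) (use len lt Fp h in auto)
  qed
qed

lemma inv_iff:
  assumes p: "is_perm (k+2) t"
  shows "is_involution (pattern (take (k+1) t)) \<longleftrightarrow>
    (\<forall>i. 1 \<le> i \<and> i \<le> k+1 \<longrightarrow> rank1 (F t (k+2)) (F t (rank1 (F t (k+2)) (F t i))) = i)"
proof -
  have len: "length t = k+2" using p by (simp add: is_perm_def)
  have Fp: "F (pattern (take (k+1) t)) i = rank1 (F t (k+2)) (F t i)" if i: "1 \<le> i" "i \<le> k+1" for i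
  proof -
    have "F (pattern (take (k+1) t)) i = card {v \<in> set (take (k+1) t). v \<le> F (take (k+1) t) i}"
      using i len by (simp add: pattern_F)
    also have "F (take (k+1) t) i = F t i" using i by (simp add: F_def)
    also have "set (take (k+1) t) = {1..k+2} - {F t (k+2)}" using take_sets(2)[OF p] .
    also have "card {v \<in> {1..k+2} - {F t (k+2)}. v \<le> F t i} = rank1 (F t (k+2)) (F t i)"
      using card_rank1 perm_rng[OF p, of "k+2"] perm_rng[OF p, of i] i by simp
    finally show ?thesis .
  qed
  have rng: "1 \<le> rank1 (F t (k+2)) (F t i) \<and> rank1 (F t (k+2)) (F t i) \<le> k+1" if i: "1 \<le> i" "i \<le> k+1" for i
  proof -
    have "F t i \<noteq> F t (k+2)" using perm_inj[OF p, of i "k+2"] i by auto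
    then show ?thesis using perm_rng[OF p, of i] perm_rng[OF p, of "k+2"] i by (auto simp: rank1_def)
  qed
  have lp: "length (pattern (take (k+1) t)) = k+1" using len by simp
  show ?thesis
  proof
    assume h: "is_involution (pattern (take (k+1) t))"
    show "\<forall>i. 1 \<le> i \<and> i \<le> k+1 \<longrightarrow> rank1 (F t (k+2)) (F t (rank1 (F t (k+2)) (F t i))) = i"
    proof (intro allI impI)
      fix i assume i: "1 \<le> i \<and> i \<le> k+1"
      have "F (pattern (take (k+1) t)) (F (pattern (take (k+1) t)) i) = i" using inv_F[OF h] i lp len by simp
      then show "rank1 (F t (k+2)) (F t (rank1 (F t (k+2)) (F t i))) = i"
        using Fp[of i] Fp[of "rank1 (F t (k+2)) (F t i)"] rng[of i] i by simp
    qed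
  next
    assume h: "\<forall>i. 1 \<le> i \<and> i \<le> k+1 \<longrightarrow> rank1 (F t (k+2)) (F t (rank1 (F t (k+2)) (F t i))) = i"
    show "is_involution (pattern (take (k+1) t))"
    proof (rule F_inv)
      fix i assume i: "1 \<le> i" "i \<le> length (pattern (take (k+1) t))"
      then show "F (pattern (take (k+1) t)) (F (pattern (take (k+1) t)) i) = i"
        using Fp[of i] Fp[of "rank1 (F t (k+2)) (F t i)"] rng[of i] h lp by simp
    qed
  qed
qed


theorem mainTheorem11:
  fixes k :: nat and tau :: "nat list"
  assumes "k \<ge> 2" and "is_perm k tau" and "layered k tau"
  shows "\<exists>!t. is_perm (k + 2) t \<and> is_involution t \<and> pattern (take k t) = tau
              \<and> \<not> is_involution (pattern (take (k + 1) t))"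
proof -
  note k2 = assms(1) and ptau = assms(2)
  obtain as where as1: "\<forall>a\<in>set as. a \<ge> 1" and as2: "sum_list as = k" and as3: "tau = layered_of as 0"
    using assms(3) unfolding layered_def by blast
  have "as \<noteq> []" using as2 k2 by auto
  then obtain bs a where asd: "as = bs @ [a]" by (metis rev_exhaust)
  define s where "s = sum_list bs"
  have a1: "a \<ge> 1" using as1 asd by simp
  have sa: "s + a = k" using as2 asd by (simp add: s_def)
  have sk: "s < k" using sa a1 by simp
  have tau_eq: "tau = layered_of bs 0 @ rev [s+1..<s+a+1]"
    using as3 asd by (simp add: layered_append s_def del: upt_Suc)
  define tf where "tf = F tau"
  have lt: "length tau = k" using ptau by (simp add: is_perm_def)
  have lL: "length (layered_of bs 0) = s" by (simp add: s_def)
  have tr: "1 \<le> tf i \<and> tf i \<le> k" if "1 \<le> i" "i \<le> k" for i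
    using perm_rng[OF ptau that] by (simp add: tf_def)
  have tinj: "i = j" if "1 \<le> i" "i \<le> k" "1 \<le> j" "j \<le> k" "tf i = tf j" for i j
    using perm_inj[OF ptau that(1,2,3,4)] that(5) by (simp add: tf_def)
  have tfL: "tf i = F (layered_of bs 0) i" if "1 \<le> i" "i \<le> s" for i
    using that lL by (simp add: tf_def tau_eq F_append)
  have HB: "1 \<le> tf i \<and> tf i \<le> s \<and> tf (tf i) = i" if "1 \<le> i" "i \<le> s" for i
  proof -
    have h: "0 < F (layered_of bs 0) i \<and> F (layered_of bs 0) i \<le> s \<and> F (layered_of bs 0) (F (layered_of bs 0) i) = i"
      using layered_inv[of i bs 0] that by (simp add: s_def)
    then show ?thesis using tfL[OF that] tfL[of "F (layered_of bs 0) i"] by simp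
  qed
  have HC: "tf j = k+s+1-j" if "s < j" "j \<le> k" for j
  proof -
    have "tf j = F (rev [s+1..<s+a+1]) (j - s)" using that lL
      by (simp add: tf_def tau_eq F_append del: upt_Suc)
    also have "\<dots> = s+a+1-(j-s)" using F_rev_upt[of "j - s" a s] that sa by simp
    finally show ?thesis using sa that by simp
  qed
  define Sol where "Sol t \<longleftrightarrow> is_perm (k + 2) t \<and> is_involution t \<and> pattern (take k t) = tau
              \<and> \<not> is_involution (pattern (take (k + 1) t))" for t
  have solT: "(\<forall>i. 1 \<le> i \<and> i \<le> k+2 \<longrightarrow> 1 \<le> F t i \<and> F t i \<le> k+2 \<and> F t (F t i) = i)
     \<and> (\<forall>i. 1 \<le> i \<and> i \<le> k \<longrightarrow> tf i = rank2 (F t (k+1)) (F t (k+2)) (F t i))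
     \<and> \<not> (\<forall>i. 1 \<le> i \<and> i \<le> k+1 \<longrightarrow> rank1 (F t (k+2)) (F t (rank1 (F t (k+2)) (F t i))) = i)"
    if st: "Sol t" for t
  proof -
    have p: "is_perm (k+2) t" and iv: "is_involution t" using st by (auto simp: Sol_def)
    have len: "length t = k+2" using p by (simp add: is_perm_def)
    show ?thesis using st perm_rng[OF p] inv_F[OF iv] len pat_iff[OF p lt] inv_iff[OF p]
      by (auto simp: Sol_def tf_def)
  qed
  have uniq: "t = mk k tf x0 y0" if st: "Sol t" and x0: "F t (k+1) = x0" and y0: "F t (k+2) = y0" for t x0 y0
  proof -
    have p: "is_perm (k+2) t" using st by (simp add: Sol_def)
    have len: "length t = k+2" using p by (simp add: is_perm_def)
    have xy: "x0 \<noteq> y0" using perm_inj[OF p, of "k+1" "k+2"] x0 y0 by auto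
    show ?thesis
    proof (rule list_eq_F)
      show "length t = length (mk k tf x0 y0)" using len by simp
      fix i assume i: "1 \<le> i" "i \<le> length t"
      show "F t i = F (mk k tf x0 y0) i"
      proof (cases "i \<le> k")
        case True
        have "tf i = rank2 x0 y0 (F t i)" using solT[OF st] i True x0 y0 by auto
        moreover have "F t i \<noteq> x0" "F t i \<noteq> y0"
          using perm_inj[OF p, of i "k+1"] perm_inj[OF p, of i "k+2"] i True x0 y0 len by auto
        ultimately have "F t i = unrank x0 y0 (tf i)" using unrank_rank[OF xy] by simp
        then show ?thesis using F_mk[of i k tf x0 y0] i True len by simp
      next
        case False
        then have "i = k+1 \<or> i = k+2" using i len by auto
        then show ?thesis using F_mk[of i k tf x0 y0] x0 y0 by auto
      qed
    qed
  qed
  have mksol: "Sol (mk k tf x0 y0)"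
    if r: "1 \<le> x0" "1 \<le> y0" "x0 \<noteq> y0"
      and TT: "\<And>i. 1 \<le> i \<Longrightarrow> i \<le> k+2 \<Longrightarrow> 1 \<le> F (mk k tf x0 y0) i \<and> F (mk k tf x0 y0) i \<le> k+2 \<and> F (mk k tf x0 y0) (F (mk k tf x0 y0) i) = i"
      and ns: "\<not> (\<forall>i. 1 \<le> i \<and> i \<le> k+1 \<longrightarrow> rank1 (F (mk k tf x0 y0) (k+2)) (F (mk k tf x0 y0) (rank1 (F (mk k tf x0 y0) (k+2)) (F (mk k tf x0 y0) i))) = i)"
    for x0 y0
  proof -
    let ?t = "mk k tf x0 y0"
    have p: "is_perm (k+2) ?t" by (rule perm_from_F) (use TT in auto)
    have iv: "is_involution ?t" by (rule F_inv) (use TT in auto)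
    have pt: "pattern (take k ?t) = tau"
      unfolding pat_iff[OF p lt]
    proof (intro allI impI)
      fix i assume i: "1 \<le> i \<and> i \<le> k"
      have "F ?t (k+1) = x0" "F ?t (k+2) = y0" "F ?t i = unrank x0 y0 (tf i)" using F_mk[of _ k tf x0 y0] i by auto
      then show "F tau i = rank2 (F ?t (k+1)) (F ?t (k+2)) (F ?t i)"
        using rank_unrank[OF r(3) r(1) r(2)] by (simp add: tf_def)
    qed
    have ni: "\<not> is_involution (pattern (take (k+1) ?t))" unfolding inv_iff[OF p] using ns .
    show ?thesis using p iv pt ni by (simp add: Sol_def)
  qed
  show ?thesis
  proof (cases "s + 1 < k")
    case True
    define t0 where "t0 = mk k tf (k+1) (s+1)"
    define G where "G i = (if i \<le> k then unrank (k+1) (s+1) (tf i) else if i = k+1 then k+1 else s+1)" for i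
    have FG: "F t0 i = G i" if "1 \<le> i" "i \<le> k+2" for i
      using F_mk[OF that, of tf "k+1" "s+1"] by (simp add: t0_def G_def)
    have FG': "F t0 i = (if i \<le> k then unrank (k+1) (s+1) (tf i) else if i = k+1 then k+1 else s+1)"
      if "1 \<le> i" "i \<le> k+2" for i using FG[OF that] by (simp add: G_def)
    have E1: "1 \<le> F t0 i \<and> F t0 i \<le> k+2 \<and> F t0 (F t0 i) = i" if "1 \<le> i" "i \<le> k+2" for i
      by (rule exA(1)[where T="F t0" and tf=tf and k=k and s=s]) (fact True, fact tr, fact HB, fact HC, fact FG', fact that(1), fact that(2))
    have E2: "\<not> (\<forall>i. 1 \<le> i \<and> i \<le> k+1 \<longrightarrow> rank1 (F t0 (k+2)) (F t0 (rank1 (F t0 (k+2)) (F t0 i))) = i)"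
      by (rule exA(2)[where T="F t0" and tf=tf and k=k and s=s]) (fact True, fact tr, fact HB, fact HC, fact FG')
    have s0: "Sol t0" unfolding t0_def
      by (rule mksol) (use E1 E2 True in \<open>auto simp: t0_def\<close>)
    show ?thesis
    proof (rule ex1I[of _ t0])
      show "is_perm (k + 2) t0 \<and> is_involution t0 \<and> pattern (take k t0) = tau \<and> \<not> is_involution (pattern (take (k + 1) t0))"
        using s0 by (simp add: Sol_def)
    next
      fix t assume "is_perm (k + 2) t \<and> is_involution t \<and> pattern (take k t) = tau \<and> \<not> is_involution (pattern (take (k + 1) t))"
      then have st: "Sol t" by (simp add: Sol_def)
      have S: "(\<forall>i. 1 \<le> i \<and> i \<le> k+2 \<longrightarrow> 1 \<le> F t i \<and> F t i \<le> k+2 \<and> F t (F t i) = i)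
     \<and> (\<forall>i. 1 \<le> i \<and> i \<le> k \<longrightarrow> tf i = rank2 (F t (k+1)) (F t (k+2)) (F t i))
     \<and> \<not> (\<forall>i. 1 \<le> i \<and> i \<le> k+1 \<longrightarrow> rank1 (F t (k+2)) (F t (rank1 (F t (k+2)) (F t i))) = i)"
        using solT[OF st] .
      have "(s+1<k \<and> F t (k+1)=k+1 \<and> F t (k+2)=s+1) \<or>
         (s+1=k \<and> F t (k+2)=k \<and> 1 \<le> F t (k+1) \<and> F t (k+1) \<le> k-1 \<and> tf (F t (k+1)) = k-1)"
        by (rule sol_xy[OF k2 sk, of "F t" tf]) (use S tinj HB HC in auto)
      then have "F t (k+1) = k+1" "F t (k+2) = s+1" using True by auto
      then show "t = t0" using uniq[OF st] by (simp add: t0_def)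
    qed
  next
    case False
    then have sk1: "s = k - 1" and a1': "a = 1" using sk sa by auto
    have "bs \<noteq> []" using sk1 k2 s_def by auto
    then obtain cs b where bsd: "bs = cs @ [b]" by (metis rev_exhaust)
    define s' where "s' = sum_list cs"
    have b1: "b \<ge> 1" using as1 asd bsd by simp
    have sb: "s' + b = s" using bsd by (simp add: s_def s'_def)
    have bs_eq: "layered_of bs 0 = layered_of cs 0 @ rev [s'+1..<s'+b+1]"
      using bsd by (simp add: layered_append s'_def del: upt_Suc)
    have lC: "length (layered_of cs 0) = s'" by (simp add: s'_def)
    have tfC: "tf i = F (layered_of cs 0) i" if "1 \<le> i" "i \<le> s'" for i
      using tfL[of i] that sb lC by (simp add: bs_eq F_append)
    have HB': "1 \<le> tf i \<and> tf i \<le> s' \<and> tf (tf i) = i" if "1 \<le> i" "i \<le> s'" for i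
    proof -
      have h: "0 < F (layered_of cs 0) i \<and> F (layered_of cs 0) i \<le> s' \<and> F (layered_of cs 0) (F (layered_of cs 0) i) = i"
        using layered_inv[of i cs 0] that by (simp add: s'_def)
      then show ?thesis using tfC[OF that] tfC[of "F (layered_of cs 0) i"] by simp
    qed
    have HC': "tf j = k+s'-j" if "s' < j" "j \<le> k - 1" for j
    proof -
      have "tf j = F (layered_of bs 0) j" using tfL[of j] that sk1 by simp
      also have "\<dots> = F (rev [s'+1..<s'+b+1]) (j - s')" using that lC
        by (simp add: bs_eq F_append del: upt_Suc)
      also have "\<dots> = s'+b+1-(j-s')" using F_rev_upt[of "j - s'" b s'] that sb sk1 by simp
      finally show ?thesis using sb sk1 that by simp
    qed
    have s'k: "s' + 1 < k" using sb b1 sk1 k2 by simp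
    have tfk: "tf k = k" using HC[of k] sk sk1 by simp
    define t0 where "t0 = mk k tf (s'+1) k"
    define G where "G i = (if i \<le> k then unrank (s'+1) k (tf i) else if i = k+1 then s'+1 else k)" for i
    have FG: "F t0 i = G i" if "1 \<le> i" "i \<le> k+2" for i
      using F_mk[OF that, of tf "s'+1" k] by (simp add: t0_def G_def)
    have FG': "F t0 i = (if i \<le> k then unrank (s'+1) k (tf i) else if i = k+1 then s'+1 else k)"
      if "1 \<le> i" "i \<le> k+2" for i using FG[OF that] by (simp add: G_def)
    have E1: "1 \<le> F t0 i \<and> F t0 i \<le> k+2 \<and> F t0 (F t0 i) = i" if "1 \<le> i" "i \<le> k+2" for i
      by (rule exB(1)[where T="F t0" and tf=tf and k=k and s=s']) (fact k2, fact s'k, fact tr, fact tfk, fact HB', fact HC', fact FG', fact that(1), fact that(2))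
    have E2: "\<not> (\<forall>i. 1 \<le> i \<and> i \<le> k+1 \<longrightarrow> rank1 (F t0 (k+2)) (F t0 (rank1 (F t0 (k+2)) (F t0 i))) = i)"
      by (rule exB(2)[where T="F t0" and tf=tf and k=k and s=s']) (fact k2, fact s'k, fact tr, fact tfk, fact HB', fact HC', fact FG')
    have s0: "Sol t0" unfolding t0_def
      by (rule mksol) (use E1 E2 s'k in \<open>auto simp: t0_def\<close>)
    show ?thesis
    proof (rule ex1I[of _ t0])
      show "is_perm (k + 2) t0 \<and> is_involution t0 \<and> pattern (take k t0) = tau \<and> \<not> is_involution (pattern (take (k + 1) t0))"
        using s0 by (simp add: Sol_def)
    next
      fix t assume "is_perm (k + 2) t \<and> is_involution t \<and> pattern (take k t) = tau \<and> \<not> is_involution (pattern (take (k + 1) t))"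
      then have st: "Sol t" by (simp add: Sol_def)
      have S: "(\<forall>i. 1 \<le> i \<and> i \<le> k+2 \<longrightarrow> 1 \<le> F t i \<and> F t i \<le> k+2 \<and> F t (F t i) = i)
     \<and> (\<forall>i. 1 \<le> i \<and> i \<le> k \<longrightarrow> tf i = rank2 (F t (k+1)) (F t (k+2)) (F t i))
     \<and> \<not> (\<forall>i. 1 \<le> i \<and> i \<le> k+1 \<longrightarrow> rank1 (F t (k+2)) (F t (rank1 (F t (k+2)) (F t i))) = i)"
        using solT[OF st] .
      have "(s+1<k \<and> F t (k+1)=k+1 \<and> F t (k+2)=s+1) \<or>
         (s+1=k \<and> F t (k+2)=k \<and> 1 \<le> F t (k+1) \<and> F t (k+1) \<le> k-1 \<and> tf (F t (k+1)) = k-1)"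
        by (rule sol_xy[OF k2 sk, of "F t" tf]) (use S tinj HB HC in auto)
      then have y: "F t (k+2) = k" and xr: "1 \<le> F t (k+1)" "F t (k+1) \<le> k-1" and tx: "tf (F t (k+1)) = k-1"
        using False by auto
      have "tf (s'+1) = k - 1" using HC'[of "s'+1"] s'k by simp
      then have "F t (k+1) = s'+1" using tinj[of "F t (k+1)" "s'+1"] xr tx s'k by simp
      then show "t = t0" using uniq[OF st] y by (simp add: t0_def)
    qed
  qed
qed

end
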